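(* Assume (A1) and (A2). Then there exists a constant $c>0$ such that for all $\mathbf{z}\in\mathbb{W}(b^* )^2$ and $\boldsymbol\vartheta\in I_{2\pi}^2$, $$\left|(\Gamma(\mathbf{z})-\Gamma(\mathbf{z}+\boldsymbol\vartheta))\cdot\Big(\frac{\partial\Gamma}{\partial z_0}\times\frac{\partial\Gamma}{\partial z_1}\Big)(\mathbf{z}+\boldsymbol\vartheta)\right|\le c\,(\zeta(\boldsymbol\vartheta))^2.$$
   Context: $I_{2\pi}=[0,2\pi)$. Let $\Gamma=[\gamma_0,\gamma_1,\gamma_2]^T:\mathbb{R}^2\to\mathbb{R}^3$ have $2\pi$-biperiodic differentiable components, with $\Gamma|_{I_{2\pi}^2}$ parametrizing the boundary of a bounded open region in $\mathbb{R}^3$ that is $C^\infty$-diffeomorphic to a torus. For $\mathbf{a},\mathbf{b}\in\mathbb{C}^3$, $\mathbf{a}\cdot\mathbf{b}=\sum_ja_jb_j$ (no conjugation), $\mathbf{a}\times\mathbf{b}=[a_1b_2-a_2b_1,a_2b_0-a_0b_2,a_0b_1-a_1b_0]^T$, $\|\mathbf{a}\|_2=(\sum_j|a_j|^2)^{1/2}$; for matrices $\|\cdot\|_2$ is the induced operator norm. For $\boldsymbol\theta\in\mathbb{R}^2$, $\zeta(\boldsymbol\theta)=\sqrt{\mathrm{dist}(\theta_0,2\pi\mathbb{Z})^2+\mathrm{dist}(\theta_1,2\pi\mathbb{Z})^2}$ (for $\boldsymbol\theta\in I_{2\pi}^2$ this is $\sqrt{(\min\{\theta_0,2\pi-\theta_0\})^2+(\min\{\theta_1,2\pi-\theta_1\})^2}$).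 For $r>0$, $\mathbb{W}(r)=\{z\in\mathbb{C}:|\mathrm{Im}\,z|<r\}$. (A1): there is $C_0>0$ with $\|\Gamma(\boldsymbol\theta)-\Gamma(\boldsymbol\eta)\|_2\ge C_0\zeta(\boldsymbol\theta-\boldsymbol\eta)$ for all $\boldsymbol\theta,\boldsymbol\eta\in I_{2\pi}^2$. (A2): there is $R_0>0$ such that for each $j$ the ($2\pi$-biperiodic) function $\gamma_j$ extends analytically to the closure of $\mathbb{W}(R_0)^2\subset\mathbb{C}^2$ (extensions still denoted $\gamma_j$, $\Gamma$; $\frac{\partial\Gamma}{\partial z_\iota}=[\frac{\partial\gamma_0}{\partial z_\iota},\frac{\partial\gamma_1}{\partial z_\iota},\frac{\partial\gamma_2}{\partial z_\iota}]^T$ are complex partial derivatives). For $\mathbf{z}=[z_0,z_1]$, $\mathrm{Re}(\mathbf{z})=[\mathrm{Re}\,z_0,\mathrm{Re}\,z_1]$; $D\gamma_j$ is the complex gradient and $\mathbf{H}_j$ the $2\times2$ complex Hessian of $\gamma_j$. Let $M_{0,j}=\sup_{\mathbf{z}\in\mathbb{W}(R_0)^2}\|D\gamma_j(\mathbf{z})+D\gamma_j(\mathrm{Re}(\mathbf{z}))\|_2$, $M_{1,j}=\sup_{\mathbf{z}\in\mathbb{W}(R_0)^2}\|\mathbf{H}_j(\mathbf{z})\|_2$, $M_0=(\sum_jM_{0,j}^2)^{1/2}$, $M_1=(\sum_jM_{1,j}^2)^{1/2}$. Fix $b$ with $0<b<\min\{\frac{C_0^2}{\sqrt2M_0M_1},\frac{R_0}{2}\}$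 and let $b^*=\frac12\big(b+\min\{\frac{C_0^2}{\sqrt2M_0M_1},\frac{R_0}{2}\}\big)$. *)

theory Defs
  imports "HOL-Analysis.Analysis"
begin

definition dist2pi :: "real \<Rightarrow> real" where
  "dist2pi t = infdist t (range (\<lambda>k::int. 2 * pi * of_int k))"

definition zeta :: "real \<times> real \<Rightarrow> real" where
  "zeta \<theta> = sqrt ((dist2pi (fst \<theta>))\<^sup>2 + (dist2pi (snd \<theta>))\<^sup>2)"

definition I2pi :: "real set" where
  "I2pi = {0..<2*pi}"

definition strip :: "real \<Rightarrow> complex set" where
  "strip r = {z. \<bar>Im z\<bar> < r}"

fun Ck_on :: "nat \<Rightarrow> (real^3) set \<Rightarrow> (real^3 \<Rightarrow> real^3) \<Rightarrow> bool" where
  "Ck_on 0 S f = continuous_on S f"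
| "Ck_on (Suc k) S f =
     (f differentiable_on S \<and>
      (\<forall>i. Ck_on k S (\<lambda>x. frechet_derivative f (at x) (axis i 1))))"

definition smooth_on :: "(real^3) set \<Rightarrow> (real^3 \<Rightarrow> real^3) \<Rightarrow> bool" where
  "smooth_on S f = (\<forall>k. Ck_on k S f)"

definition diffeomorphic_smooth :: "(real^3) set \<Rightarrow> (real^3) set \<Rightarrow> bool" where
  "diffeomorphic_smooth S T =
     (\<exists>f. bij_betw f S T \<and> smooth_on S f \<and> smooth_on T (inv_into S f))"

definition solid_torus :: "(real^3) set" where
  "solid_torus = {x. (sqrt ((x$1)\<^sup>2 + (x$2)\<^sup>2) - 2)\<^sup>2 + (x$3)\<^sup>2 < 1}"

definition holo2_on :: "(complex \<times> complex) set \<Rightarrow> (complex \<times> complex \<Rightarrow> complex) \<Rightarrow> bool" where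
  "holo2_on S f = (\<forall>z\<in>S. \<exists>a b. (f has_derivative (\<lambda>h. a * fst h + b * snd h)) (at z))"

definition pd0 :: "(complex \<times> complex \<Rightarrow> complex) \<Rightarrow> complex \<times> complex \<Rightarrow> complex" where
  "pd0 f z = deriv (\<lambda>w. f (w, snd z)) (fst z)"

definition pd1 :: "(complex \<times> complex \<Rightarrow> complex) \<Rightarrow> complex \<times> complex \<Rightarrow> complex" where
  "pd1 f z = deriv (\<lambda>w. f (fst z, w)) (snd z)"

definition cnorm2 :: "complex \<times> complex \<Rightarrow> real" where
  "cnorm2 v = sqrt ((cmod (fst v))\<^sup>2 + (cmod (snd v))\<^sup>2)"

definition Re2 :: "complex \<times> complex \<Rightarrow> complex \<times> complex" where
  "Re2 z = (complex_of_real (Re (fst z)), complex_of_real (Re (snd z)))"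

definition cgrad :: "(complex \<times> complex \<Rightarrow> complex) \<Rightarrow> complex \<times> complex \<Rightarrow> complex \<times> complex" where
  "cgrad f z = (pd0 f z, pd1 f z)"

definition hess_opnorm :: "(complex \<times> complex \<Rightarrow> complex) \<Rightarrow> complex \<times> complex \<Rightarrow> real" where
  "hess_opnorm f z =
     (SUP v\<in>{v. cnorm2 v = 1}.
        cnorm2 (pd0 (pd0 f) z * fst v + pd1 (pd0 f) z * snd v,
                pd0 (pd1 f) z * fst v + pd1 (pd1 f) z * snd v))"

definition cdot :: "complex^3 \<Rightarrow> complex^3 \<Rightarrow> complex" where
  "cdot a b = (\<Sum>j\<in>UNIV. a$j * b$j)"

text \<open>Paper indices 0,1,2 correspond to 1,2,3 here.\<close>
definition ccross :: "complex^3 \<Rightarrow> complex^3 \<Rightarrow> complex^3" where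
  "ccross a b = vector [a$2 * b$3 - a$3 * b$2, a$3 * b$1 - a$1 * b$3, a$1 * b$2 - a$2 * b$1]"

definition dG0 :: "(complex \<times> complex \<Rightarrow> complex^3) \<Rightarrow> complex \<times> complex \<Rightarrow> complex^3" where
  "dG0 G z = (\<chi> j. pd0 (\<lambda>w. G w $ j) z)"

definition dG1 :: "(complex \<times> complex \<Rightarrow> complex^3) \<Rightarrow> complex \<times> complex \<Rightarrow> complex^3" where
  "dG1 G z = (\<chi> j. pd1 (\<lambda>w. G w $ j) z)"

definition M0c :: "(complex \<times> complex \<Rightarrow> complex^3) \<Rightarrow> real \<Rightarrow> real" where
  "M0c G R0 = sqrt (\<Sum>j\<in>UNIV.
     (SUP z\<in>strip R0 \<times> strip R0.
        cnorm2 (cgrad (\<lambda>w. G w $ j) z + cgrad (\<lambda>w. G w $ j) (Re2 z)))\<^sup>2)"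

definition M1c :: "(complex \<times> complex \<Rightarrow> complex^3) \<Rightarrow> real \<Rightarrow> real" where
  "M1c G R0 = sqrt (\<Sum>j\<in>UNIV.
     (SUP z\<in>strip R0 \<times> strip R0. hess_opnorm (\<lambda>w. G w $ j) z)\<^sup>2)"

definition bstar :: "(complex \<times> complex \<Rightarrow> complex^3) \<Rightarrow> real \<Rightarrow> real \<Rightarrow> real \<Rightarrow> real" where
  "bstar G C0 R0 b =
     (b + min (C0\<^sup>2 / (sqrt 2 * M0c G R0 * M1c G R0)) (R0 / 2)) / 2"

end

theory Submission imports Defs "HOL-Complex_Analysis.Complex_Analysis" begin

lemma dir_deriv:
  fixes f :: "complex \<times> complex \<Rightarrow> complex"
  assumes "(f has_derivative (\<lambda>h. a * fst h + b * snd h)) (at (x0 + s*c0, x1 + s*c1))"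
  shows "((\<lambda>t. f (x0 + t*c0, x1 + t*c1)) has_field_derivative (a*c0 + b*c1)) (at s)"
proof -
  have i: "((\<lambda>t. (x0 + t*c0, x1 + t*c1)) has_derivative (\<lambda>h. (h*c0, h*c1))) (at s)"
    by (auto intro!: derivative_eq_intros)
  have "((\<lambda>t. f (x0 + t*c0, x1 + t*c1)) has_derivative (\<lambda>h. a * fst (h*c0, h*c1) + b * snd (h*c0, h*c1))) (at s)"
    using has_derivative_compose[OF i assms] by simp
  then show ?thesis unfolding has_field_derivative_def
    by (rule has_derivative_eq_rhs) (auto simp: algebra_simps)
qed

lemma slice_deriv:
  fixes f :: "complex \<times> complex \<Rightarrow> complex"
  assumes "(f has_derivative (\<lambda>h. a * fst h + b * snd h)) (at (x, y))"
  shows "((\<lambda>t. f (t, y)) has_field_derivative a) (at x)"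
    "((\<lambda>t. f (x, t)) has_field_derivative b) (at y)"
    "pd0 f (x,y) = a" "pd1 f (x,y) = b"
proof -
  have "((\<lambda>t. f (0 + t*1, y + t*0)) has_field_derivative (a*1 + b*0)) (at x)"
    by (rule dir_deriv) (use assms in simp)
  then show 1: "((\<lambda>t. f (t, y)) has_field_derivative a) (at x)" by simp
  have "((\<lambda>t. f (x + t*0, 0 + t*1)) has_field_derivative (a*0 + b*1)) (at y)"
    by (rule dir_deriv) (use assms in simp)
  then show 2: "((\<lambda>t. f (x, t)) has_field_derivative b) (at y)" by simp
  show "pd0 f (x,y) = a" unfolding pd0_def using 1 by (simp add: DERIV_imp_deriv)
  show "pd1 f (x,y) = b" unfolding pd1_def using 2 by (simp add: DERIV_imp_deriv)
qed

lemma strip_open: "open (strip r)"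
  unfolding strip_def by (auto intro!: open_Collect_less continuous_intros)

lemma strip_convex: "convex (strip r)"
  unfolding strip_def convex_def
proof (clarify)
  fix x y :: complex and u v :: real
  assume "\<bar>Im x\<bar> < r" "\<bar>Im y\<bar> < r" "0 \<le> u" "0 \<le> v" "u + v = 1"
  then have "\<bar>u * Im x + v * Im y\<bar> \<le> u * \<bar>Im x\<bar> + v * \<bar>Im y\<bar>"
    by (metis abs_mult abs_of_nonneg abs_triangle_ineq)
  also have "\<dots> \<le> u * max (\<bar>Im x\<bar>) (\<bar>Im y\<bar>) + v * max (\<bar>Im x\<bar>) (\<bar>Im y\<bar>)"
    using \<open>0 \<le> u\<close> \<open>0 \<le> v\<close> by (intro add_mono mult_left_mono) auto
  also have "\<dots> = max (\<bar>Im x\<bar>) (\<bar>Im y\<bar>)" using \<open>u + v = 1\<close> by (metis distrib_right mult_1)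
  also have "\<dots> < r" using \<open>\<bar>Im x\<bar> < r\<close> \<open>\<bar>Im y\<bar> < r\<close> by simp
  finally show "\<bar>Im (u *\<^sub>R x + v *\<^sub>R y)\<bar> < r" by simp
qed

lemma zero_islimpt_Reals: "(0::complex) islimpt \<real>"
  unfolding islimpt_approachable
proof (intro allI impI)
  fix e :: real assume e: "0 < e"
  have h1: "complex_of_real (e/2) \<in> \<real>" by (rule Reals_of_real)
  have h2: "complex_of_real (e/2) \<noteq> 0" using e by simp
  have h3: "dist (complex_of_real (e/2)) 0 < e" using e by (simp add: dist_norm)
  show "\<exists>x'::complex\<in>\<real>. x' \<noteq> 0 \<and> dist x' 0 < e"
    by (rule bexI[of _ "complex_of_real (e/2)"], rule conjI) (rule h2, rule h3, rule h1)
qed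


lemma strip_shift: "w \<in> strip r \<Longrightarrow> w + complex_of_real c \<in> strip r"
  by (simp add: strip_def)

lemma strip_Reals: "0 < r \<Longrightarrow> \<real> \<subseteq> strip r"
  by (auto simp: strip_def elim!: Reals_cases)

lemma line_holo:
  fixes g :: "complex \<times> complex \<Rightarrow> complex"
  assumes hol: "\<And>z. z \<in> V \<Longrightarrow> \<exists>a b. (g has_derivative (\<lambda>h. a * fst h + b * snd h)) (at z)"
    and inS: "\<And>t. t \<in> S \<Longrightarrow> (x0 + t*c0, x1 + t*c1) \<in> V"
  shows "(\<lambda>t. g (x0 + t*c0, x1 + t*c1)) holomorphic_on S"
  unfolding holomorphic_on_def
proof
  fix t assume "t \<in> S"
  then obtain a b where "(g has_derivative (\<lambda>h. a * fst h + b * snd h)) (at (x0 + t*c0, x1 + t*c1))"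
    using hol inS by blast
  then have "((\<lambda>t. g (x0 + t*c0, x1 + t*c1)) has_field_derivative (a*c0 + b*c1)) (at t)"
    by (rule dir_deriv)
  then show "(\<lambda>t. g (x0 + t*c0, x1 + t*c1)) field_differentiable at t within S"
    using field_differentiable_at_within field_differentiable_def by blast
qed

lemma per_first:
  fixes g :: "complex \<times> complex \<Rightarrow> complex"
  assumes R0: "0 < R0"
    and hol: "\<And>z. z \<in> strip R0 \<times> strip R0 \<Longrightarrow> \<exists>a b. (g has_derivative (\<lambda>h. a * fst h + b * snd h)) (at z)"
    and rp: "\<And>x y. g (complex_of_real (x + 2*pi), complex_of_real y) = g (complex_of_real x, complex_of_real y)"
    and w0: "w0 \<in> strip R0" and w1: "w1 \<in> strip R0"
  shows "g (w0 + complex_of_real (2*pi), w1) = g (w0, w1)"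
proof -
  have oc: "open (strip R0)" "connected (strip R0)"
    using strip_open strip_convex convex_connected by auto
  have "0 \<in> strip R0" using R0 by (simp add: strip_def)
  have A: "g (w + complex_of_real (2*pi), complex_of_real y) = g (w, complex_of_real y)"
    if w: "w \<in> strip R0" for w y
  proof -
    let ?f = "\<lambda>t. g (complex_of_real (2*pi) + t*1, complex_of_real y + t*0) - g (0 + t*1, complex_of_real y + t*0)"
    have "?f holomorphic_on strip R0"
      by (intro holomorphic_on_diff line_holo[where V="strip R0 \<times> strip R0"] hol)
         (auto simp: strip_def)
    moreover have "?f z = 0" if "z \<in> \<real>" for z
    proof -
      obtain x where "z = complex_of_real x" using \<open>z \<in> \<real>\<close> by (auto elim: Reals_cases)
      then show ?thesis using rp[of x y] by (simp add: add.commute)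
    qed
    ultimately have "?f w = 0"
      by (rule analytic_continuation[OF _ oc strip_Reals[OF R0] \<open>0 \<in> strip R0\<close> zero_islimpt_Reals _ w])
    then show ?thesis by (simp add: add.commute)
  qed
  let ?f = "\<lambda>t. g (w0 + complex_of_real (2*pi) + t*0, 0 + t*1) - g (w0 + t*0, 0 + t*1)"
  have "?f holomorphic_on strip R0"
    by (intro holomorphic_on_diff line_holo[where V="strip R0 \<times> strip R0"] hol)
       (use w0 in \<open>auto simp: strip_def\<close>)
  moreover have "?f z = 0" if "z \<in> \<real>" for z
  proof -
    obtain y where "z = complex_of_real y" using \<open>z \<in> \<real>\<close> by (auto elim: Reals_cases)
    then show ?thesis using A[OF w0, of y] by simp
  qed
  ultimately have "?f w1 = 0"
    by (rule analytic_continuation[OF _ oc strip_Reals[OF R0] \<open>0 \<in> strip R0\<close> zero_islimpt_Reals _ w1])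
  then show ?thesis by simp
qed


lemma per_second:
  fixes g :: "complex \<times> complex \<Rightarrow> complex"
  assumes R0: "0 < R0"
    and hol: "\<And>z. z \<in> strip R0 \<times> strip R0 \<Longrightarrow> \<exists>a b. (g has_derivative (\<lambda>h. a * fst h + b * snd h)) (at z)"
    and rp: "\<And>x y. g (complex_of_real x, complex_of_real (y + 2*pi)) = g (complex_of_real x, complex_of_real y)"
    and w0: "w0 \<in> strip R0" and w1: "w1 \<in> strip R0"
  shows "g (w0, w1 + complex_of_real (2*pi)) = g (w0, w1)"
proof -
  have oc: "open (strip R0)" "connected (strip R0)"
    using strip_open strip_convex convex_connected by auto
  have "0 \<in> strip R0" using R0 by (simp add: strip_def)
  have A: "g (complex_of_real x, w + complex_of_real (2*pi)) = g (complex_of_real x, w)"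
    if w: "w \<in> strip R0" for w x
  proof -
    let ?f = "\<lambda>t. g (complex_of_real x + t*0, complex_of_real (2*pi) + t*1) - g (complex_of_real x + t*0, 0 + t*1)"
    have "?f holomorphic_on strip R0"
      by (intro holomorphic_on_diff line_holo[where V="strip R0 \<times> strip R0"] hol)
         (auto simp: strip_def)
    moreover have "?f z = 0" if "z \<in> \<real>" for z
    proof -
      obtain y where "z = complex_of_real y" using \<open>z \<in> \<real>\<close> by (auto elim: Reals_cases)
      then show ?thesis using rp[of x y] by (simp add: add.commute)
    qed
    ultimately have "?f w = 0"
      by (rule analytic_continuation[OF _ oc strip_Reals[OF R0] \<open>0 \<in> strip R0\<close> zero_islimpt_Reals _ w])
    then show ?thesis by (simp add: add.commute)
  qed
  let ?f = "\<lambda>t. g (0 + t*1, w1 + complex_of_real (2*pi) + t*0) - g (0 + t*1, w1 + t*0)"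
  have "?f holomorphic_on strip R0"
    by (intro holomorphic_on_diff line_holo[where V="strip R0 \<times> strip R0"] hol)
       (use w1 in \<open>auto simp: strip_def\<close>)
  moreover have "?f z = 0" if "z \<in> \<real>" for z
  proof -
    obtain x where "z = complex_of_real x" using \<open>z \<in> \<real>\<close> by (auto elim: Reals_cases)
    then show ?thesis using A[OF w1, of x] by simp
  qed
  ultimately have "?f w0 = 0"
    by (rule analytic_continuation[OF _ oc strip_Reals[OF R0] \<open>0 \<in> strip R0\<close> zero_islimpt_Reals _ w0])
  then show ?thesis by simp
qed

lemma int_shift_nat:
  fixes h :: "complex \<Rightarrow> 'b"
  assumes p: "\<And>w. w \<in> strip r \<Longrightarrow> h (w + complex_of_real (2*pi)) = h w"
  shows "w \<in> strip r \<Longrightarrow> h (w + complex_of_real (2*pi*real n)) = h w"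
proof (induction n arbitrary: w)
  case 0 then show ?case by simp
next
  case (Suc n)
  have "w + complex_of_real (2*pi*real (Suc n)) = (w + complex_of_real (2*pi*real n)) + complex_of_real (2*pi)"
    by (simp add: algebra_simps)
  then have "h (w + complex_of_real (2*pi*real (Suc n))) = h ((w + complex_of_real (2*pi*real n)) + complex_of_real (2*pi))"
    by (simp only:)
  also have "\<dots> = h (w + complex_of_real (2*pi*real n))"
    by (rule p[OF strip_shift[OF Suc.prems]])
  also have "\<dots> = h w" by (rule Suc.IH[OF Suc.prems])
  finally show ?case .
qed

lemma int_shift:
  fixes h :: "complex \<Rightarrow> 'b"
  assumes p: "\<And>w. w \<in> strip r \<Longrightarrow> h (w + complex_of_real (2*pi)) = h w"
    and w: "w \<in> strip r"
  shows "h (w + complex_of_real (2*pi*real_of_int m)) = h w"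
proof (cases "m \<ge> 0")
  case True
  define n where "n = nat m"
  have "m = int n" using True by (simp add: n_def)
  then show ?thesis using int_shift_nat[where h=h and r=r, OF p w, of n] by simp
next
  case False
  define n where "n = nat (-m)"
  have n: "m = - int n" using False by (simp add: n_def)
  let ?v = "w + complex_of_real (- (2*pi*real n))"
  have "?v \<in> strip r" using strip_shift[OF w] .
  from int_shift_nat[where h=h and r=r, OF p this, of n] have "h w = h ?v" by simp
  then show ?thesis using n by simp
qed


lemma red_range: "0 \<le> x - 2*pi * of_int \<lfloor>x/(2*pi)\<rfloor> \<and> x - 2*pi * of_int \<lfloor>x/(2*pi)\<rfloor> \<le> 2*pi"
proof -
  have p: "0 < 2*pi" by simp
  have a: "of_int \<lfloor>x/(2*pi)\<rfloor> \<le> x/(2*pi)" by (rule of_int_floor_le)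
  have b: "x/(2*pi) < of_int \<lfloor>x/(2*pi)\<rfloor> + 1" by (rule real_of_int_floor_add_one_gt)
  have "2*pi * of_int \<lfloor>x/(2*pi)\<rfloor> \<le> 2*pi*(x/(2*pi))" by (rule mult_left_mono[OF a]) simp
  moreover have "2*pi*(x/(2*pi)) \<le> 2*pi*(of_int \<lfloor>x/(2*pi)\<rfloor> + 1)" by (rule mult_left_mono[OF less_imp_le[OF b]]) simp
  moreover have "2*pi*(x/(2*pi)) = x" by simp
  ultimately show ?thesis by (simp add: algebra_simps)
qed

lemma bound_K:
  fixes g :: "complex \<times> complex \<Rightarrow> complex"
  assumes R0: "0 < R0" and a: "a < R0"
    and hol: "\<And>z. z \<in> strip R0 \<times> strip R0 \<Longrightarrow> \<exists>a b. (g has_derivative (\<lambda>h. a * fst h + b * snd h)) (at z)"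
    and p0: "\<And>w0 w1. w0 \<in> strip R0 \<Longrightarrow> w1 \<in> strip R0 \<Longrightarrow> g (w0 + complex_of_real (2*pi), w1) = g (w0, w1)"
    and p1: "\<And>w0 w1. w0 \<in> strip R0 \<Longrightarrow> w1 \<in> strip R0 \<Longrightarrow> g (w0, w1 + complex_of_real (2*pi)) = g (w0, w1)"
  shows "\<exists>K>0. \<forall>w0 w1. \<bar>Im w0\<bar> \<le> a \<longrightarrow> \<bar>Im w1\<bar> \<le> a \<longrightarrow> cmod (g (w0, w1)) \<le> K"
proof -
  define Q where "Q = cbox (Complex 0 (-a)) (Complex (2*pi) a)"
  have Qs: "Q \<subseteq> strip R0" using a by (auto simp: Q_def in_cbox_complex_iff strip_def)
  have cQ: "compact (Q \<times> Q)" unfolding Q_def by (intro compact_Times compact_cbox)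
  have "continuous_on (Q \<times> Q) g"
  proof (rule continuous_at_imp_continuous_on, rule ballI)
    fix z assume "z \<in> Q \<times> Q"
    then have "z \<in> strip R0 \<times> strip R0" using Qs by blast
    then obtain a b where "(g has_derivative (\<lambda>h. a * fst h + b * snd h)) (at z)" using hol by blast
    then show "isCont g z" by (rule has_derivative_continuous)
  qed
  then have "compact (g ` (Q \<times> Q))" using cQ compact_continuous_image by blast
  then obtain K where K: "\<And>x. x \<in> g ` (Q \<times> Q) \<Longrightarrow> norm x \<le> K"
    using compact_imp_bounded bounded_iff by metis
  show ?thesis
  proof (intro exI[of _ "\<bar>K\<bar> + 1"] conjI allI impI)
    show "0 < \<bar>K\<bar> + 1" by simp
    fix w0 w1 :: complex assume i0: "\<bar>Im w0\<bar> \<le> a" and i1: "\<bar>Im w1\<bar> \<le> a"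
    define m0 where "m0 = \<lfloor>Re w0/(2*pi)\<rfloor>"
    define m1 where "m1 = \<lfloor>Re w1/(2*pi)\<rfloor>"
    define v0 where "v0 = w0 + complex_of_real (- (2*pi * of_int m0))"
    define v1 where "v1 = w1 + complex_of_real (- (2*pi * of_int m1))"
    have s0: "w0 \<in> strip R0" "v0 \<in> strip R0" using i0 a by (auto simp: strip_def v0_def)
    have s1: "w1 \<in> strip R0" "v1 \<in> strip R0" using i1 a by (auto simp: strip_def v1_def)
    have q0: "v0 \<in> Q" using red_range[of "Re w0"] i0 by (auto simp: Q_def in_cbox_complex_iff v0_def m0_def)
    have q1: "v1 \<in> Q" using red_range[of "Re w1"] i1 by (auto simp: Q_def in_cbox_complex_iff v1_def m1_def)
    have e0: "v0 + complex_of_real (2*pi*real_of_int m0) = w0" by (simp add: v0_def)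
    have e1: "v1 + complex_of_real (2*pi*real_of_int m1) = w1" by (simp add: v1_def)
    have "g (w0, w1) = g (v0, w1)"
      using int_shift[where h="\<lambda>w. g (w, w1)" and r=R0, OF p0[OF _ s1(1)] s0(2), of m0] e0 by simp
    also have "\<dots> = g (v0, v1)"
      using int_shift[where h="\<lambda>w. g (v0, w)" and r=R0, OF p1[OF s0(2)] s1(2), of m1] e1 by simp
    finally have "g (w0, w1) = g (v0, v1)" .
    then have "cmod (g (w0, w1)) \<le> K" using K[of "g (v0, v1)"] q0 q1 by auto
    then show "cmod (g (w0, w1)) \<le> \<bar>K\<bar> + 1" by simp
  qed
qed


lemma im_bound: "\<bar>u\<bar> \<le> 1 \<Longrightarrow> \<bar>Im (w + t * complex_of_real u)\<bar> \<le> \<bar>Im w\<bar> + \<bar>Im t\<bar>"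
proof -
  assume u: "\<bar>u\<bar> \<le> 1"
  have "\<bar>Im t * u\<bar> \<le> \<bar>Im t\<bar>" using u by (simp add: abs_mult mult_left_le)
  then show ?thesis by simp
qed

lemma im_ball: "y \<in> cball x e \<Longrightarrow> \<bar>Im y\<bar> \<le> \<bar>Im x\<bar> + e"
proof -
  assume "y \<in> cball x e"
  then have "cmod (y - x) \<le> e" by (simp add: dist_norm norm_minus_commute)
  moreover have "\<bar>Im (y - x)\<bar> \<le> cmod (y - x)" by (rule abs_Im_le_cmod)
  ultimately show ?thesis by simp
qed

lemma im_ball': "y \<in> ball x e \<Longrightarrow> \<bar>Im y\<bar> \<le> \<bar>Im x\<bar> + e"
  using im_ball ball_subset_cball by blast

lemma pd_bound:
  fixes g :: "complex \<times> complex \<Rightarrow> complex"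
  assumes R0: "0 < R0"
    and hol: "\<And>z. z \<in> strip R0 \<times> strip R0 \<Longrightarrow> \<exists>a b. (g has_derivative (\<lambda>h. a * fst h + b * snd h)) (at z)"
    and Kb: "\<And>w0 w1. \<bar>Im w0\<bar> \<le> 7*R0/8 \<Longrightarrow> \<bar>Im w1\<bar> \<le> 7*R0/8 \<Longrightarrow> cmod (g (w0, w1)) \<le> K"
    and i0: "\<bar>Im w0\<bar> < R0/2" and i1: "\<bar>Im w1\<bar> < R0/2"
  shows "cmod (pd0 g (w0, w1)) \<le> fact 1 * (K+1) / (R0/8)^1"
    "cmod (pd1 g (w0, w1)) \<le> fact 1 * (K+1) / (R0/8)^1"
proof -
  let ?f = "\<lambda>t. g (0 + t*1, w1 + t*0)"
  have "pd0 g (w0, w1) = (deriv ^^ 1) ?f w0" by (simp add: pd0_def)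
  also have "cmod \<dots> \<le> fact 1 * (K+1) / (R0/8)^1"
  proof (rule Cauchy_higher_deriv_bound)
    show "?f holomorphic_on ball w0 (R0/8)"
    proof (rule line_holo[where V="strip R0 \<times> strip R0", OF hol])
      fix t assume "t \<in> ball w0 (R0/8)"
      then have "\<bar>Im t\<bar> \<le> \<bar>Im w0\<bar> + R0/8" by (rule im_ball')
      then show "(0 + t*1, w1 + t*0) \<in> strip R0 \<times> strip R0" using i0 i1 R0 by (simp add: strip_def)
    qed
    show "continuous_on (cball w0 (R0/8)) ?f"
    proof (rule holomorphic_on_imp_continuous_on, rule line_holo[where V="strip R0 \<times> strip R0", OF hol])
      fix t assume "t \<in> cball w0 (R0/8)"
      then have "\<bar>Im t\<bar> \<le> \<bar>Im w0\<bar> + R0/8" by (rule im_ball)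
      then show "(0 + t*1, w1 + t*0) \<in> strip R0 \<times> strip R0" using i0 i1 R0 by (simp add: strip_def)
    qed
    show "?f y \<in> ball 0 (K+1)" if "y \<in> ball w0 (R0/8)" for y
    proof -
      have "\<bar>Im y\<bar> \<le> \<bar>Im w0\<bar> + R0/8" using im_ball[of y w0 "R0/8"] that by simp
      then have "cmod (?f y) \<le> K" using i0 i1 by (intro Kb) auto
      then show ?thesis by simp
    qed
  qed (use R0 in auto)
  finally show "cmod (pd0 g (w0, w1)) \<le> fact 1 * (K+1) / (R0/8)^1" .
next
  let ?f = "\<lambda>t. g (w0 + t*0, 0 + t*1)"
  have "pd1 g (w0, w1) = (deriv ^^ 1) ?f w1" by (simp add: pd1_def)
  also have "cmod \<dots> \<le> fact 1 * (K+1) / (R0/8)^1"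
  proof (rule Cauchy_higher_deriv_bound)
    show "?f holomorphic_on ball w1 (R0/8)"
    proof (rule line_holo[where V="strip R0 \<times> strip R0", OF hol])
      fix t assume "t \<in> ball w1 (R0/8)"
      then have "\<bar>Im t\<bar> \<le> \<bar>Im w1\<bar> + R0/8" by (rule im_ball')
      then show "(w0 + t*0, 0 + t*1) \<in> strip R0 \<times> strip R0" using i0 i1 R0 by (simp add: strip_def)
    qed
    show "continuous_on (cball w1 (R0/8)) ?f"
    proof (rule holomorphic_on_imp_continuous_on, rule line_holo[where V="strip R0 \<times> strip R0", OF hol])
      fix t assume "t \<in> cball w1 (R0/8)"
      then have "\<bar>Im t\<bar> \<le> \<bar>Im w1\<bar> + R0/8" by (rule im_ball)
      then show "(w0 + t*0, 0 + t*1) \<in> strip R0 \<times> strip R0" using i0 i1 R0 by (simp add: strip_def)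
    qed
    show "?f y \<in> ball 0 (K+1)" if "y \<in> ball w1 (R0/8)" for y
    proof -
      have "\<bar>Im y\<bar> \<le> \<bar>Im w1\<bar> + R0/8" using im_ball[of y w1 "R0/8"] that by simp
      then have "cmod (?f y) \<le> K" using i0 i1 by (intro Kb) auto
      then show ?thesis by simp
    qed
  qed (use R0 in auto)
  finally show "cmod (pd1 g (w0, w1)) \<le> fact 1 * (K+1) / (R0/8)^1" .
qed


lemma taylor_rem:
  fixes g :: "complex \<times> complex \<Rightarrow> complex"
  assumes R0: "0 < R0"
    and hol: "\<And>z. z \<in> strip R0 \<times> strip R0 \<Longrightarrow> \<exists>a b. (g has_derivative (\<lambda>h. a * fst h + b * snd h)) (at z)"
    and Kb: "\<And>w0 w1. \<bar>Im w0\<bar> \<le> 7*R0/8 \<Longrightarrow> \<bar>Im w1\<bar> \<le> 7*R0/8 \<Longrightarrow> cmod (g (w0, w1)) \<le> K"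
    and i0: "\<bar>Im w0\<bar> < R0/2" and i1: "\<bar>Im w1\<bar> < R0/2"
    and u0: "\<bar>u0\<bar> \<le> 1" and u1: "\<bar>u1\<bar> \<le> 1"
  shows "cmod (g (w0 + complex_of_real r * complex_of_real u0, w1 + complex_of_real r * complex_of_real u1) - g (w0, w1)
           - (pd0 g (w0, w1) * complex_of_real u0 + pd1 g (w0, w1) * complex_of_real u1) * complex_of_real r)
         \<le> fact 2 * (K+1) / (R0/8)^2 * r^2"
proof -
  define c0 where "c0 = complex_of_real u0"
  define c1 where "c1 = complex_of_real u1"
  define \<psi> where "\<psi> = (\<lambda>t. g (w0 + t*c0, w1 + t*c1))"
  define T where "T = strip (R0/2)"
  define S where "S = strip (R0/4)"
  have imb: "\<bar>Im (w0 + t*c0)\<bar> \<le> \<bar>Im w0\<bar> + \<bar>Im t\<bar>" "\<bar>Im (w1 + t*c1)\<bar> \<le> \<bar>Im w1\<bar> + \<bar>Im t\<bar>" for t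
    unfolding c0_def c1_def using im_bound u0 u1 by auto
  have inV: "(w0 + t*c0, w1 + t*c1) \<in> strip R0 \<times> strip R0" if "\<bar>Im t\<bar> < R0/2" for t
    using imb[of t] that i0 i1 by (simp add: strip_def)
  have holT: "\<psi> holomorphic_on T" unfolding \<psi>_def
    by (rule line_holo[where V="strip R0 \<times> strip R0", OF hol]) (use inV in \<open>auto simp: T_def strip_def\<close>)
  have oT: "open T" unfolding T_def by (rule strip_open)
  have hd: "deriv \<psi> holomorphic_on T" by (rule holomorphic_deriv[OF holT oT])
  have ST: "S \<subseteq> T" using R0 by (auto simp: S_def T_def strip_def)
  define B where "B = fact 2 * (K+1) / (R0/8)^2"
  have tay: "cmod ((deriv ^^ 0) \<psi> (complex_of_real r) - (\<Sum>i\<le>1. (deriv ^^ i) \<psi> 0 * (complex_of_real r - 0) ^ i / fact i))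
         \<le> B * cmod (complex_of_real r - 0) ^ Suc 1 / fact 1"
  proof (rule complex_Taylor[of S 1 "\<lambda>i. (deriv ^^ i) \<psi>" B 0 "complex_of_real r"])
    show "convex S" unfolding S_def by (rule strip_convex)
    show "0 \<in> S" "complex_of_real r \<in> S" using R0 by (auto simp: S_def strip_def)
    fix i :: nat and x assume x: "x \<in> S" and i: "i \<le> 1"
    then have xT: "x \<in> T" using ST by blast
    show "((deriv ^^ i) \<psi> has_field_derivative (deriv ^^ Suc i) \<psi> x) (at x within S)"
    proof (cases "i = 0")
      case True
      then show ?thesis using holomorphic_derivI[OF holT oT xT] by simp
    next
      case False
      then have "i = 1" using i by simp
      then show ?thesis using holomorphic_derivI[OF hd oT xT] by simp
    qed
  next
    fix x assume x: "x \<in> S"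
    have ix: "\<bar>Im x\<bar> < R0/4" using x by (simp add: S_def strip_def)
    show "cmod ((deriv ^^ Suc 1) \<psi> x) \<le> B"
      unfolding B_def Suc_1
    proof (rule Cauchy_higher_deriv_bound)
      show "\<psi> holomorphic_on ball x (R0/8)"
      proof (rule holomorphic_on_subset[OF holT], rule subsetI)
        fix t assume "t \<in> ball x (R0/8)"
        then have "\<bar>Im t\<bar> \<le> \<bar>Im x\<bar> + R0/8" by (rule im_ball')
        then show "t \<in> T" using ix R0 by (simp add: T_def strip_def)
      qed
      show "continuous_on (cball x (R0/8)) \<psi>"
      proof (rule holomorphic_on_imp_continuous_on, rule holomorphic_on_subset[OF holT], rule subsetI)
        fix t assume "t \<in> cball x (R0/8)"
        then have "\<bar>Im t\<bar> \<le> \<bar>Im x\<bar> + R0/8" by (rule im_ball)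
        then show "t \<in> T" using ix R0 by (simp add: T_def strip_def)
      qed
      show "\<psi> y \<in> ball 0 (K+1)" if "y \<in> ball x (R0/8)" for y
      proof -
        have "\<bar>Im y\<bar> \<le> \<bar>Im x\<bar> + R0/8" using that by (rule im_ball')
        then have "cmod (\<psi> y) \<le> K" unfolding \<psi>_def
          using imb[of y] ix i0 i1 by (intro Kb) auto
        then show ?thesis by simp
      qed
    qed (use R0 in auto)
  qed
  obtain a b where ab: "(g has_derivative (\<lambda>h. a * fst h + b * snd h)) (at (w0, w1))"
  proof -
    have "\<bar>Im w0\<bar> < R0" "\<bar>Im w1\<bar> < R0" using i0 i1 abs_ge_zero[of "Im w0"] abs_ge_zero[of "Im w1"] by linarith+
    then have "(w0, w1) \<in> strip R0 \<times> strip R0" by (simp add: strip_def)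
    then show ?thesis using hol that by blast
  qed
  have "(\<psi> has_field_derivative (a*c0 + b*c1)) (at 0)"
    unfolding \<psi>_def by (rule dir_deriv) (use ab in simp)
  then have d0: "deriv \<psi> 0 = a*c0 + b*c1" by (rule DERIV_imp_deriv)
  have pd: "pd0 g (w0, w1) = a" "pd1 g (w0, w1) = b" using slice_deriv[OF ab] by auto
  have "(\<Sum>i\<le>(1::nat). (deriv ^^ i) \<psi> 0 * (complex_of_real r - 0) ^ i / fact i) = \<psi> 0 + deriv \<psi> 0 * complex_of_real r"
    by simp
  then have "cmod (\<psi> (complex_of_real r) - (\<psi> 0 + deriv \<psi> 0 * complex_of_real r)) \<le> B * r^2"
    using tay by (simp add: power2_eq_square)
  then show ?thesis using d0 pd
    by (simp add: \<psi>_def c0_def c1_def B_def algebra_simps)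
qed


lemma cross_comp_bound:
  fixes a b c d :: complex
  assumes "cmod a \<le> P" "cmod b \<le> P" "cmod c \<le> P" "cmod d \<le> P"
  shows "cmod (a*b - c*d) \<le> 2*P^2"
proof -
  have P: "0 \<le> P" using assms(1) norm_ge_zero[of a] by linarith
  have "cmod (a*b) \<le> P*P" unfolding norm_mult using assms P by (intro mult_mono) auto
  moreover have "cmod (c*d) \<le> P*P" unfolding norm_mult using assms P by (intro mult_mono) auto
  moreover have "cmod (a*b - c*d) \<le> cmod (a*b) + cmod (c*d)" by (rule norm_triangle_ineq4)
  ultimately show ?thesis by (simp add: power2_eq_square)
qed

lemma prod_bound:
  fixes x y :: complex
  assumes "cmod x \<le> E" "cmod y \<le> Q"
  shows "cmod (x*y) \<le> E*Q"
proof -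
  have E: "0 \<le> E" using assms(1) norm_ge_zero[of x] by linarith
  show ?thesis unfolding norm_mult using assms E by (intro mult_mono) auto
qed

lemma cross_bound:
  fixes P0 P1 :: "complex^3"
  assumes P0b: "\<And>j. cmod (P0$j) \<le> P" and P1b: "\<And>j. cmod (P1$j) \<le> P"
  shows "cmod (ccross P0 P1 $ j) \<le> 2*P^2"
proof -
  consider "j = 1" | "j = 2" | "j = 3" using exhaust_3 by blast
  then show ?thesis
  proof cases
    case 1 then show ?thesis unfolding \<open>j = 1\<close> ccross_def vector_3 by (intro cross_comp_bound P0b P1b)
  next
    case 2 then show ?thesis unfolding \<open>j = 2\<close> ccross_def vector_3 by (intro cross_comp_bound P0b P1b)
  next
    case 3 then show ?thesis unfolding \<open>j = 3\<close> ccross_def vector_3 by (intro cross_comp_bound P0b P1b)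
  qed
qed

lemma final_alg:
  fixes X R P0 P1 :: "complex^3" and u0 u1 r :: complex
  assumes X: "\<And>j. X$j = R$j + (P0$j*u0 + P1$j*u1)*r"
    and Rb: "\<And>j. cmod (R$j) \<le> E" and P0b: "\<And>j. cmod (P0$j) \<le> P" and P1b: "\<And>j. cmod (P1$j) \<le> P"
  shows "cmod (cdot X (ccross P0 P1)) \<le> 6*E*P^2"
proof -
  define N where "N = ccross P0 P1"
  have "cdot X (ccross P0 P1) = cdot R (ccross P0 P1)"
    unfolding cdot_def ccross_def sum_3 X vector_3 by algebra
  then have e: "cdot X N = (\<Sum>j\<in>UNIV. R$j * N$j)" unfolding N_def cdot_def by simp
  have b: "cmod (R$j * N$j) \<le> E * (2*P^2)" for j
    unfolding N_def by (rule prod_bound[OF Rb cross_bound[OF P0b P1b]])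
  have "cmod (cdot X N) \<le> (\<Sum>j\<in>UNIV. cmod (R$j * N$j))" unfolding e by (rule norm_sum)
  also have "\<dots> \<le> (\<Sum>j\<in>(UNIV::3 set). E * (2*P^2))" by (rule sum_mono[OF b])
  also have "\<dots> = 6*E*P^2" by simp
  finally show ?thesis unfolding N_def .
qed

lemma dist2pi_ge:
  assumes t: "0 \<le> t" "t < 2*pi"
  shows "min t (2*pi - t) \<le> dist2pi t"
  unfolding dist2pi_def
proof (subst infdist_notempty, simp, rule cINF_greatest, simp)
  fix a assume "a \<in> range (\<lambda>k::int. 2 * pi * of_int k)"
  then obtain k :: int where a: "a = 2 * pi * of_int k" by blast
  show "min t (2*pi - t) \<le> dist t a"
  proof (cases "k \<le> 0")
    case True
    then have "2 * pi * of_int k \<le> 0" by (simp add: mult_nonneg_nonpos)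
    then show ?thesis using a t by (simp add: dist_real_def)
  next
    case False
    then have "1 \<le> real_of_int k" by simp
    then have k: "2 * pi * 1 \<le> 2 * pi * of_int k" by (intro mult_left_mono) auto
    have "-(t - a) \<le> \<bar>t - a\<bar>" by (rule abs_ge_minus_self)
    moreover have "min t (2*pi - t) \<le> 2*pi - t" by (rule min.cobounded2)
    ultimately show ?thesis using a k unfolding dist_real_def by linarith
  qed
qed

theorem lemma3:
  fixes \<Gamma> :: "real \<times> real \<Rightarrow> real^3"
    and G :: "complex \<times> complex \<Rightarrow> complex^3"
    and C0 R0 b :: real
  assumes per0: "\<And>x y. \<Gamma> (x + 2*pi, y) = \<Gamma> (x, y)"
    and per1: "\<And>x y. \<Gamma> (x, y + 2*pi) = \<Gamma> (x, y)"
    and diff: "\<And>t. \<Gamma> differentiable (at t)"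
    and torus: "\<exists>\<Omega>. open \<Omega> \<and> bounded \<Omega> \<and> diffeomorphic_smooth \<Omega> solid_torus \<and>
                  frontier \<Omega> = \<Gamma> ` (I2pi \<times> I2pi) \<and> inj_on \<Gamma> (I2pi \<times> I2pi)"
    and A1: "C0 > 0"
            "\<And>\<theta> \<eta>. \<theta> \<in> I2pi \<times> I2pi \<Longrightarrow> \<eta> \<in> I2pi \<times> I2pi \<Longrightarrow>
                 norm (\<Gamma> \<theta> - \<Gamma> \<eta>) \<ge> C0 * zeta (\<theta> - \<eta>)"
    and A2: "R0 > 0"
            "\<exists>U. open U \<and> closure (strip R0 \<times> strip R0) \<subseteq> U \<and>
                 (\<forall>j. holo2_on U (\<lambda>w. G w $ j))"
            "\<And>x y. G (complex_of_real x, complex_of_real y) = (\<chi> j. complex_of_real (\<Gamma> (x, y) $ j))"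
    and b: "0 < b" "b < min (C0\<^sup>2 / (sqrt 2 * M0c G R0 * M1c G R0)) (R0 / 2)"
  shows "\<exists>c>0. \<forall>z \<in> strip (bstar G C0 R0 b) \<times> strip (bstar G C0 R0 b).
           \<forall>\<theta> \<in> I2pi \<times> I2pi.
             let z\<theta> = (fst z + complex_of_real (fst \<theta>), snd z + complex_of_real (snd \<theta>)) in
             cmod (cdot (G z - G z\<theta>) (ccross (dG0 G z\<theta>) (dG1 G z\<theta>))) \<le> c * (zeta \<theta>)\<^sup>2"
proof -
  obtain U where U: "open U" "closure (strip R0 \<times> strip R0) \<subseteq> U" "\<forall>j. holo2_on U (\<lambda>w. G w $ j)"
    using A2(2) by (elim exE conjE) (rule that)
  have hol: "\<exists>a b. ((\<lambda>w. G w $ j) has_derivative (\<lambda>h. a * fst h + b * snd h)) (at z)"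
    if zS: "z \<in> strip R0 \<times> strip R0" for j z
  proof -
    have zU: "z \<in> U" using subsetD[OF U(2) subsetD[OF closure_subset zS]] .
    have "holo2_on U (\<lambda>w. G w $ j)" using U(3) by (rule spec)
    then have "\<forall>z\<in>U. \<exists>a b. ((\<lambda>w. G w $ j) has_derivative (\<lambda>h. a * fst h + b * snd h)) (at z)"
      unfolding holo2_on_def .
    then show ?thesis using zU by (rule bspec)
  qed
  have rp0: "G (complex_of_real (x + 2*pi), complex_of_real y) $ j = G (complex_of_real x, complex_of_real y) $ j" for j x y
    by (simp only: A2(3) per0)
  have rp1: "G (complex_of_real x, complex_of_real (y + 2*pi)) $ j = G (complex_of_real x, complex_of_real y) $ j" for j x y
    by (simp only: A2(3) per1)
  have p0: "G (w0 + complex_of_real (2*pi), w1) $ j = G (w0, w1) $ j"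
    if "w0 \<in> strip R0" "w1 \<in> strip R0" for j w0 w1
    using per_first[where g="\<lambda>w. G w $ j", OF A2(1) hol rp0 that] by simp
  have p1: "G (w0, w1 + complex_of_real (2*pi)) $ j = G (w0, w1) $ j"
    if "w0 \<in> strip R0" "w1 \<in> strip R0" for j w0 w1
    using per_second[where g="\<lambda>w. G w $ j", OF A2(1) hol rp1 that] by simp
  have "\<forall>j. \<exists>K>0. \<forall>w0 w1. \<bar>Im w0\<bar> \<le> 7*R0/8 \<longrightarrow> \<bar>Im w1\<bar> \<le> 7*R0/8 \<longrightarrow> cmod (G (w0, w1) $ j) \<le> K"
  proof
    fix j
    show "\<exists>K>0. \<forall>w0 w1. \<bar>Im w0\<bar> \<le> 7*R0/8 \<longrightarrow> \<bar>Im w1\<bar> \<le> 7*R0/8 \<longrightarrow> cmod (G (w0, w1) $ j) \<le> K"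
      using bound_K[where g="\<lambda>w. G w $ j" and a="7*R0/8", OF A2(1) _ hol p0 p1] A2(1) by simp
  qed
  then obtain Kf where Kf0: "\<forall>j. Kf j > 0 \<and> (\<forall>w0 w1. \<bar>Im w0\<bar> \<le> 7*R0/8 \<longrightarrow> \<bar>Im w1\<bar> \<le> 7*R0/8 \<longrightarrow> cmod (G (w0, w1) $ j) \<le> Kf j)"
    unfolding choice_iff by blast
  have Kf: "\<And>j. Kf j > 0"
    "\<And>j w0 w1. \<bar>Im w0\<bar> \<le> 7*R0/8 \<Longrightarrow> \<bar>Im w1\<bar> \<le> 7*R0/8 \<Longrightarrow> cmod (G (w0, w1) $ j) \<le> Kf j"
    using Kf0 by blast+
  define K where "K = (\<Sum>j\<in>UNIV. Kf j)"
  have KfK: "Kf j \<le> K" for j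
    unfolding K_def by (rule member_le_sum) (auto intro: less_imp_le Kf(1))
  have Kpos: "0 < K" using KfK[of 1] Kf(1)[of 1] by linarith
  have Kb: "cmod (G (w0, w1) $ j) \<le> K" if "\<bar>Im w0\<bar> \<le> 7*R0/8" "\<bar>Im w1\<bar> \<le> 7*R0/8" for j w0 w1
    using Kf(2)[OF that, of j] KfK[of j] by linarith
  define bs where "bs = bstar G C0 R0 b"
  have bs: "bs < R0/2"
  proof -
    define m where "m = min (C0\<^sup>2 / (sqrt 2 * M0c G R0 * M1c G R0)) (R0 / 2)"
    have m1: "m \<le> R0/2" unfolding m_def by (rule min.cobounded2)
    have m2: "b < m" unfolding m_def by (rule b(2))
    have "bs = (b + m) / 2" unfolding bs_def bstar_def m_def by (rule refl)
    then show ?thesis using m1 m2 by argo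
  qed
  define P where "P = fact 1 * (K+1) / (R0/8)^1"
  define Bc where "Bc = fact 2 * (K+1) / (R0/8)^2"
  define c where "c = 6 * Bc * P^2"
  have Ppos: "0 < P" unfolding P_def using Kpos A2(1) by simp
  have Bpos: "0 < Bc" unfolding Bc_def using Kpos A2(1) by simp
  show ?thesis
  proof (intro exI[of _ c] conjI ballI)
    show "0 < c" unfolding c_def using Ppos Bpos by simp
    fix z \<theta> assume z: "z \<in> strip (bstar G C0 R0 b) \<times> strip (bstar G C0 R0 b)" and th: "\<theta> \<in> I2pi \<times> I2pi"
    obtain z0 z1 where zz: "z = (z0, z1)" by (cases z)
    obtain t0 t1 where tt: "\<theta> = (t0, t1)" by (cases \<theta>)
    have iz: "\<bar>Im z0\<bar> < R0/2" "\<bar>Im z1\<bar> < R0/2"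
      using z bs unfolding zz bs_def by (auto simp: strip_def)
    have zS: "z0 \<in> strip R0" "z1 \<in> strip R0"
      using iz abs_ge_zero[of "Im z0"] abs_ge_zero[of "Im z1"] by (auto simp: strip_def)
    have t: "0 \<le> t0" "t0 < 2*pi" "0 \<le> t1" "t1 < 2*pi" using th unfolding tt I2pi_def by auto
    define s0 where "s0 = (if t0 \<le> pi then t0 else t0 - 2*pi)"
    define s1 where "s1 = (if t1 \<le> pi then t1 else t1 - 2*pi)"
    define m0 :: int where "m0 = (if t0 \<le> pi then 0 else 1)"
    define m1 :: int where "m1 = (if t1 \<le> pi then 0 else 1)"
    define w0 where "w0 = z0 + complex_of_real t0"
    define w1 where "w1 = z1 + complex_of_real t1"
    have iw: "\<bar>Im w0\<bar> < R0/2" "\<bar>Im w1\<bar> < R0/2" using iz by (auto simp: w0_def w1_def)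
    have sd0: "\<bar>s0\<bar> \<le> dist2pi t0"
      using dist2pi_ge[OF t(1,2)] t(1,2) unfolding s0_def by (auto simp: min_def split: if_splits)
    have sd1: "\<bar>s1\<bar> \<le> dist2pi t1"
      using dist2pi_ge[OF t(3,4)] t(3,4) unfolding s1_def by (auto simp: min_def split: if_splits)
    define r where "r = zeta \<theta>"
    have r: "r = sqrt ((dist2pi t0)\<^sup>2 + (dist2pi t1)\<^sup>2)" unfolding r_def zeta_def tt by simp
    have d0r: "dist2pi t0 \<le> r"
    proof -
      have nn: "0 \<le> dist2pi t0" unfolding dist2pi_def by (rule infdist_nonneg)
      have "dist2pi t0 = sqrt ((dist2pi t0)\<^sup>2)" using nn by simp
      also have "\<dots> \<le> r" unfolding r by (rule real_sqrt_le_mono) simp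
      finally show ?thesis .
    qed
    have d1r: "dist2pi t1 \<le> r"
    proof -
      have nn: "0 \<le> dist2pi t1" unfolding dist2pi_def by (rule infdist_nonneg)
      have "dist2pi t1 = sqrt ((dist2pi t1)\<^sup>2)" using nn by simp
      also have "\<dots> \<le> r" unfolding r by (rule real_sqrt_le_mono) simp
      finally show ?thesis .
    qed
    have sh0: "w0 - complex_of_real s0 = z0 + complex_of_real (2*pi*real_of_int m0)"
      unfolding w0_def s0_def m0_def by auto
    have sh1: "w1 - complex_of_real s1 = z1 + complex_of_real (2*pi*real_of_int m1)"
      unfolding w1_def s1_def m1_def by auto
    have Gz: "G (z0, z1) $ j = G (w0 - complex_of_real s0, w1 - complex_of_real s1) $ j" for j
    proof -
      have a: "G (z0 + complex_of_real (2*pi*real_of_int m0), z1) $ j = G (z0, z1) $ j"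
        using int_shift[where h="\<lambda>w. G (w, z1) $ j" and r=R0, OF p0[OF _ zS(2)] zS(1), of m0] by simp
      have zS': "z0 + complex_of_real (2*pi*real_of_int m0) \<in> strip R0" by (rule strip_shift[OF zS(1)])
      have b: "G (z0 + complex_of_real (2*pi*real_of_int m0), z1 + complex_of_real (2*pi*real_of_int m1)) $ j
          = G (z0 + complex_of_real (2*pi*real_of_int m0), z1) $ j"
        using int_shift[where h="\<lambda>w. G (z0 + complex_of_real (2*pi*real_of_int m0), w) $ j" and r=R0,
            OF p1[OF zS'] zS(2), of m1] by simp
      show ?thesis unfolding sh0 sh1 using a b by simp
    qed
    have zt: "(fst z + complex_of_real (fst \<theta>), snd z + complex_of_real (snd \<theta>)) = (w0, w1)"
      unfolding zz tt w0_def w1_def by simp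
    show "let z\<theta> = (fst z + complex_of_real (fst \<theta>), snd z + complex_of_real (snd \<theta>)) in
             cmod (cdot (G z - G z\<theta>) (ccross (dG0 G z\<theta>) (dG1 G z\<theta>))) \<le> c * (zeta \<theta>)\<^sup>2"
      unfolding Let_def zt r_def[symmetric]
    proof (cases "r = 0")
      case True
      then have "dist2pi t0 = 0" "dist2pi t1 = 0" using d0r d1r infdist_nonneg unfolding dist2pi_def
        by (auto intro: antisym)
      then have "s0 = 0" "s1 = 0" using sd0 sd1 by auto
      then have "G z = G (w0, w1)" using Gz unfolding zz by (simp add: vec_eq_iff)
      then show "cmod (cdot (G z - G (w0, w1)) (ccross (dG0 G (w0, w1)) (dG1 G (w0, w1)))) \<le> c * r\<^sup>2"
        using True by (simp add: cdot_def)
    next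
      case False
      have "0 \<le> r" unfolding r by simp
      then have rpos: "0 < r" using False by simp
      define u0 where "u0 = - s0 / r"
      define u1 where "u1 = - s1 / r"
      have u0: "\<bar>u0\<bar> \<le> 1" using sd0 d0r rpos unfolding u0_def by (simp add: abs_div divide_le_eq_1)
      have u1: "\<bar>u1\<bar> \<le> 1" using sd1 d1r rpos unfolding u1_def by (simp add: abs_div divide_le_eq_1)
      have "r * u0 = - s0" unfolding u0_def using rpos by (simp add: field_simps)
      then have ru0: "complex_of_real r * complex_of_real u0 = - complex_of_real s0"
        by (simp only: of_real_mult[symmetric] of_real_minus)
      have "r * u1 = - s1" unfolding u1_def using rpos by (simp add: field_simps)
      then have ru1: "complex_of_real r * complex_of_real u1 = - complex_of_real s1"
        by (simp only: of_real_mult[symmetric] of_real_minus)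
      define P0 where "P0 = dG0 G (w0, w1)"
      define P1 where "P1 = dG1 G (w0, w1)"
      define X where "X = G z - G (w0, w1)"
      define R where "R = (\<chi> j. X$j - (P0$j * complex_of_real u0 + P1$j * complex_of_real u1) * complex_of_real r)"
      have P0j: "P0 $ j = pd0 (\<lambda>w. G w $ j) (w0, w1)" for j unfolding P0_def dG0_def by simp
      have P1j: "P1 $ j = pd1 (\<lambda>w. G w $ j) (w0, w1)" for j unfolding P1_def dG1_def by simp
      have "cmod (cdot X (ccross P0 P1)) \<le> 6 * (Bc * r^2) * P^2"
      proof (rule final_alg)
        show "X $ j = R $ j + (P0 $ j * complex_of_real u0 + P1 $ j * complex_of_real u1) * complex_of_real r" for j
          unfolding R_def by simp
        show "cmod (R $ j) \<le> Bc * r^2" for j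
        proof -
          have "cmod (G (w0 + complex_of_real r * complex_of_real u0, w1 + complex_of_real r * complex_of_real u1) $ j - G (w0, w1) $ j
           - (pd0 (\<lambda>w. G w $ j) (w0, w1) * complex_of_real u0 + pd1 (\<lambda>w. G w $ j) (w0, w1) * complex_of_real u1) * complex_of_real r)
           \<le> Bc * r^2"
            unfolding Bc_def
            by (rule taylor_rem[where g="\<lambda>w. G w $ j", OF A2(1) hol Kb iw u0 u1])
          then show ?thesis unfolding R_def X_def P0j P1j ru0 ru1 using Gz[of j] unfolding zz
            by (simp add: algebra_simps)
        qed
        show "cmod (P0 $ j) \<le> P" for j
          unfolding P0j P_def by (rule pd_bound(1)[where g="\<lambda>w. G w $ j", OF A2(1) hol Kb iw])
        show "cmod (P1 $ j) \<le> P" for j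
          unfolding P1j P_def by (rule pd_bound(2)[where g="\<lambda>w. G w $ j", OF A2(1) hol Kb iw])
      qed
      then show "cmod (cdot (G z - G (w0, w1)) (ccross (dG0 G (w0, w1)) (dG1 G (w0, w1)))) \<le> c * r\<^sup>2"
        unfolding X_def P0_def P1_def c_def by (simp add: algebra_simps)
    qed
  qed
qed

end
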